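(* Let $\Gamma$ be any messageless secret-key code over the alphabet $\{0,1\}$ with codeword space $\{0,1\}^n$, $n\ge 1$, and let $\delta\in(0,1)$. If $\Gamma$ satisfies $\mathcal{F}^{\mathrm{ind}}_{\alpha n}$-tamper detection for $\alpha=(1+\delta)/2$, then $\Gamma$ does not satisfy soundness.
   Context: A messageless secret-key code over alphabet $\Sigma$ with codeword space $\Sigma^n$ is a triple of polynomial-time algorithms $\Gamma=(\mathsf{KGen},\mathsf{Enc},\mathsf{Dec})$: $\mathsf{KGen}(1^\lambda)$ is randomized and outputs a secret key $sk$; $\mathsf{Enc}(sk)$ (possibly randomized) outputs a codeword $\gamma\in\Sigma^n$; $\mathsf{Dec}(sk,\gamma)$ is deterministic and outputs one of $\mathtt{valid},\mathtt{invalid},\mathtt{tampered}$. A function $\nu(\lambda)$ is negligible, written $\mathsf{negl}(\lambda)$, if $\nu(\lambda)=o(\lambda^{-c})$ for every $c>0$. Soundness: for every fixed $\hat\gamma\in\Sigma^n$, $\Pr[\mathsf{Dec}(sk,\hat\gamma)\neq\mathtt{invalid} : sk\leftarrow\mathsf{KGen}(1^\lambda)]\le\mathsf{negl}(\lambda)$. $\mathcal{F}$-tamper detection, for a family $\mathcal{F}$ of (possibly randomized) functions $f:\Sigma^n\to\Sigma^n$: for every $f\in\mathcal{F}$, $\Pr[\mathsf{Dec}(sk,\tilde\gamma)\neq\mathtt{tampered}\wedge\tilde\gamma\neq\gamma : sk\leftarrow\mathsf{KGen}(1^\lambda);\ \gamma\leftarrow\mathsf{Enc}(sk);\ \tilde\gamma\leftarrow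 f(\gamma)]\le\mathsf{negl}(\lambda)$. $\mathcal{F}^{\mathrm{ind}}_{\alpha n}$ denotes the family of independent-tampering functions with rate $\alpha$: randomized length-preserving maps $f:\Sigma^n\to\Sigma^n$ that act independently on each coordinate, each coordinate being modified with probability at most $\alpha$. In particular (for $\Sigma=\{0,1\}$) it contains the map that, independently for each position $i$, replaces $\gamma_i$ by a uniformly random bit with probability $1/2$ and leaves it unchanged with probability $1/2$. *)

theory Defs
  imports "HOL-Probability.Probability" "HOL-Library.Landau_Symbols"
begin

datatype dec_result = Valid | Invalid | Tampered

definition negligible :: "(nat \<Rightarrow> real) \<Rightarrow> bool" where
  "negligible nu \<longleftrightarrow> (\<forall>c::real. c > 0 \<longrightarrow> nu \<in> o(\<lambda>l. inverse (real l powr c)))"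

fun ind_apply :: "(nat \<Rightarrow> bool \<Rightarrow> bool pmf) \<Rightarrow> nat \<Rightarrow> bool list \<Rightarrow> bool list pmf" where
  "ind_apply ch i [] = return_pmf []"
| "ind_apply ch i (b # bs) =
     bind_pmf (ch i b) (\<lambda>b'. bind_pmf (ind_apply ch (Suc i) bs) (\<lambda>bs'. return_pmf (b' # bs')))"

definition ind_tamper_family :: "nat \<Rightarrow> real \<Rightarrow> (bool list \<Rightarrow> bool list pmf) set" where
  "ind_tamper_family n \<alpha> =
     {f. \<exists>ch. (\<forall>i<n. \<forall>b. measure_pmf.prob (ch i b) {b'. b' \<noteq> b} \<le> \<alpha>) \<and>
              (\<forall>\<gamma>. length \<gamma> = n \<longrightarrow> f \<gamma> = ind_apply ch 0 \<gamma>)}"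

text \<open>A messageless secret-key code: KGen l (keys), Enc l sk (codewords in {0,1}^(n l)),
  Dec l sk (deterministic).\<close>
definition is_code :: "(nat \<Rightarrow> nat) \<Rightarrow> (nat \<Rightarrow> 'k \<Rightarrow> bool list pmf) \<Rightarrow> bool" where
  "is_code n Enc \<longleftrightarrow> (\<forall>l sk \<gamma>. \<gamma> \<in> set_pmf (Enc l sk) \<longrightarrow> length \<gamma> = n l)"

definition sound ::
  "(nat \<Rightarrow> nat) \<Rightarrow> (nat \<Rightarrow> 'k pmf) \<Rightarrow> (nat \<Rightarrow> 'k \<Rightarrow> bool list \<Rightarrow> dec_result) \<Rightarrow> bool" where
  "sound n KGen Dec \<longleftrightarrow>
     (\<forall>\<gamma>h :: nat \<Rightarrow> bool list. (\<forall>l. length (\<gamma>h l) = n l) \<longrightarrow>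
        negligible (\<lambda>l. measure_pmf.prob (KGen l) {sk. Dec l sk (\<gamma>h l) \<noteq> Invalid}))"

definition tamper_exp ::
  "(nat \<Rightarrow> 'k pmf) \<Rightarrow> (nat \<Rightarrow> 'k \<Rightarrow> bool list pmf) \<Rightarrow> (nat \<Rightarrow> 'k \<Rightarrow> bool list \<Rightarrow> dec_result)
   \<Rightarrow> (nat \<Rightarrow> bool list \<Rightarrow> bool list pmf) \<Rightarrow> nat \<Rightarrow> bool pmf" where
  "tamper_exp KGen Enc Dec f l =
     bind_pmf (KGen l) (\<lambda>sk. bind_pmf (Enc l sk) (\<lambda>\<gamma>. bind_pmf (f l \<gamma>) (\<lambda>\<gamma>'.
       return_pmf (Dec l sk \<gamma>' \<noteq> Tampered \<and> \<gamma>' \<noteq> \<gamma>))))"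

definition ind_tamper_detecting ::
  "(nat \<Rightarrow> nat) \<Rightarrow> real \<Rightarrow> (nat \<Rightarrow> 'k pmf) \<Rightarrow> (nat \<Rightarrow> 'k \<Rightarrow> bool list pmf)
   \<Rightarrow> (nat \<Rightarrow> 'k \<Rightarrow> bool list \<Rightarrow> dec_result) \<Rightarrow> bool" where
  "ind_tamper_detecting n \<alpha> KGen Enc Dec \<longleftrightarrow>
     (\<forall>f :: nat \<Rightarrow> bool list \<Rightarrow> bool list pmf. (\<forall>l. f l \<in> ind_tamper_family (n l) \<alpha>) \<longrightarrow>
        negligible (\<lambda>l. pmf (tamper_exp KGen Enc Dec f l) True))"

end

theory Submission imports Defs begin

abbreviation chU :: "nat \<Rightarrow> bool \<Rightarrow> bool pmf" where "chU \<equiv> (\<lambda>i b. bernoulli_pmf (1/2))"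

lemma ind_len_only: "ind_apply chU i xs = ind_apply chU i (replicate (length xs) True)"
  by (induction xs arbitrary: i) simp_all

lemma ind_len: "ys \<in> set_pmf (ind_apply ch i xs) \<Longrightarrow> length ys = length xs"
  by (induction xs arbitrary: i ys) auto

lemma ind_pmf_le: "xs \<noteq> [] \<Longrightarrow> pmf (ind_apply chU i xs) cs \<le> 1/2"
proof (cases xs)
  case (Cons b bs)
  let ?R = "ind_apply chU (Suc i) bs"
  have e: "\<And>b'. bind_pmf ?R (\<lambda>bs'. return_pmf (b' # bs')) = map_pmf (Cons b') ?R"
    by (simp add: map_pmf_def)
  have s: "pmf (map_pmf (Cons True) ?R) cs + pmf (map_pmf (Cons False) ?R) cs \<le> 1"
  proof (cases cs)
    case Nil
    have "\<And>b'. Cons b' -` {cs} = {}" using Nil by auto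
    then show ?thesis by (simp add: pmf_map)
  next
    case (Cons c cs')
    have "\<And>b'. Cons b' -` {cs} = (if b' = c then {cs'} else {})" using Cons by auto
    then show ?thesis by (cases c) (simp_all add: pmf_map measure_pmf_single pmf_le_1)
  qed
  show ?thesis using Cons s by (simp add: pmf_bind e)
qed simp

lemma int_pmf: "integrable (measure_pmf p) (\<lambda>x. pmf (g x) y)"
  by (rule measure_pmf.integrable_const_bound[where B=1]) (auto simp: pmf_le_1)

lemma key:
  fixes K :: "'k pmf" and E :: "'k \<Rightarrow> bool list pmf" and D :: "'k \<Rightarrow> bool list \<Rightarrow> dec_result"
    and U :: "bool list pmf" and val :: "bool list \<Rightarrow> real"
  assumes lenE: "\<And>sk \<gamma>. \<gamma> \<in> set_pmf (E sk) \<Longrightarrow> length \<gamma> = m"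
    and lenU: "\<And>u. u \<in> set_pmf U \<Longrightarrow> length u = m"
    and Uhalf: "\<And>\<gamma>. length \<gamma> = m \<Longrightarrow> pmf U \<gamma> \<le> 1/2"
    and val: "\<And>u. val u = measure_pmf.prob K {sk. D sk u \<noteq> Invalid}"
    and Sb: "\<And>u. length u = m \<Longrightarrow> val u \<le> S"
  shows "1/2 \<le> pmf (bind_pmf K (\<lambda>sk. bind_pmf (E sk) (\<lambda>\<gamma>. bind_pmf U (\<lambda>u.
       return_pmf (D sk u \<noteq> Tampered \<and> u \<noteq> \<gamma>))))) True + S"
proof -
  define q where "q sk = pmf (bind_pmf U (\<lambda>u. return_pmf (D sk u \<noteq> Invalid))) True" for sk
  define g where "g sk \<gamma> = pmf (bind_pmf U (\<lambda>u. return_pmf (D sk u \<noteq> Tampered \<and> u \<noteq> \<gamma>))) True" for sk \<gamma>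
  have inner: "1/2 - q sk \<le> g sk \<gamma>" if "length \<gamma> = m" for sk \<gamma>
  proof -
    have "g sk \<gamma> = (\<integral>u. indicator {True} (D sk u \<noteq> Tampered \<and> u \<noteq> \<gamma>) \<partial>U)"
      by (simp add: g_def pmf_bind)
    also have "\<dots> \<ge> (\<integral>u. 1 - indicator {\<gamma>} u - indicator {True} (D sk u \<noteq> Invalid) \<partial>U)"
      by (rule integral_mono) (auto intro!: measure_pmf.integrable_const_bound[where B=2] split: split_indicator)
    moreover have "(\<integral>u. 1 - indicator {\<gamma>} u - indicator {True} (D sk u \<noteq> Invalid) \<partial>U)
       = 1 - pmf U \<gamma> - q sk"
      by (subst Bochner_Integration.integral_diff Bochner_Integration.integral_diff;
          auto intro!: measure_pmf.integrable_const_bound[where B=2] simp: q_def pmf_bind measure_pmf_single split: split_indicator)+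
    ultimately show ?thesis using Uhalf[OF that] by linarith
  qed
  have P: "pmf (bind_pmf K (\<lambda>sk. bind_pmf (E sk) (\<lambda>\<gamma>. bind_pmf U (\<lambda>u.
       return_pmf (D sk u \<noteq> Tampered \<and> u \<noteq> \<gamma>))))) True = (\<integral>sk. (\<integral>\<gamma>. g sk \<gamma> \<partial>E sk) \<partial>K)"
    by (simp add: pmf_bind g_def)
  have "(\<integral>sk. (\<integral>\<gamma>. g sk \<gamma> \<partial>E sk) \<partial>K) \<ge> (\<integral>sk. (1/2 - q sk) \<partial>K)"
  proof (rule integral_mono_AE)
    show "integrable (measure_pmf K) (\<lambda>sk. (\<integral>\<gamma>. g sk \<gamma> \<partial>E sk))"
      unfolding g_def by (simp add: pmf_bind[symmetric] int_pmf)
    show "integrable (measure_pmf K) (\<lambda>sk. 1/2 - q sk)"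
      unfolding q_def by (intro Bochner_Integration.integrable_diff int_pmf) simp
    show "AE sk in measure_pmf K. 1/2 - q sk \<le> (\<integral>\<gamma>. g sk \<gamma> \<partial>E sk)"
    proof (rule AE_pmfI)
      fix sk
      have "(\<integral>\<gamma>. (1/2 - q sk) \<partial>E sk) \<le> (\<integral>\<gamma>. g sk \<gamma> \<partial>E sk)"
        by (rule integral_mono_AE) (auto simp: g_def int_pmf intro!: AE_pmfI inner[unfolded g_def] lenE)
      then show "1/2 - q sk \<le> (\<integral>\<gamma>. g sk \<gamma> \<partial>E sk)" by simp
    qed
  qed
  moreover have "(\<integral>sk. (1/2 - q sk) \<partial>K) = 1/2 - (\<integral>sk. q sk \<partial>K)"
    unfolding q_def by (subst Bochner_Integration.integral_diff) (auto simp: int_pmf)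
  moreover have "(\<integral>sk. q sk \<partial>K) \<le> S"
  proof -
    have "(\<integral>sk. q sk \<partial>K) = pmf (bind_pmf K (\<lambda>sk. bind_pmf U (\<lambda>u. return_pmf (D sk u \<noteq> Invalid)))) True"
      by (simp add: q_def pmf_bind)
    also have "\<dots> = pmf (bind_pmf U (\<lambda>u. bind_pmf K (\<lambda>sk. return_pmf (D sk u \<noteq> Invalid)))) True"
      by (subst bind_commute_pmf) rule
    also have "\<dots> = (\<integral>u. val u \<partial>U)"
    proof -
      have "pmf (bind_pmf K (\<lambda>sk. return_pmf (D sk u \<noteq> Invalid))) True = val u" for u
      proof -
        have "pmf (bind_pmf K (\<lambda>sk. return_pmf (D sk u \<noteq> Invalid))) True
            = pmf (map_pmf (\<lambda>sk. D sk u \<noteq> Invalid) K) True" by (simp add: map_pmf_def)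
        also have "\<dots> = val u" by (simp add: pmf_map val vimage_def)
        finally show ?thesis .
      qed
      then show ?thesis by (simp add: pmf_bind)
    qed
    also have "\<dots> \<le> (\<integral>u. S \<partial>U)"
      by (rule integral_mono_AE) (auto simp: val intro!: AE_pmfI Sb[unfolded val] lenU
          measure_pmf.integrable_const_bound[where B=1])
    finally show ?thesis by simp
  qed
  ultimately show ?thesis using P by linarith
qed

theorem mainTheorem2:
  fixes n :: "nat \<Rightarrow> nat"
    and KGen :: "nat \<Rightarrow> 'k pmf"
    and Enc :: "nat \<Rightarrow> 'k \<Rightarrow> bool list pmf"
    and Dec :: "nat \<Rightarrow> 'k \<Rightarrow> bool list \<Rightarrow> dec_result"
    and \<delta> :: real
  assumes "\<forall>l. n l \<ge> 1"
    and "is_code n Enc"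
    and "0 < \<delta>" and "\<delta> < 1"
    and "ind_tamper_detecting n ((1 + \<delta>) / 2) KGen Enc Dec"
  shows "\<not> sound n KGen Dec"
proof
  assume snd: "sound n KGen Dec"
  define f where "f = (\<lambda>(l::nat) \<gamma>. ind_apply chU 0 \<gamma>)"
  define U where "U l = ind_apply chU 0 (replicate (n l) True)" for l
  define val where "val l u = measure_pmf.prob (KGen l) {sk. Dec l sk u \<noteq> Invalid}" for l u
  have fam: "f l \<in> ind_tamper_family (n l) ((1 + \<delta>) / 2)" for l
  proof -
    have "measure_pmf.prob (bernoulli_pmf (1/2)) {b'. b' \<noteq> b} = 1/2" for b
    proof -
      have "{b'. b' \<noteq> b} = {\<not> b}" by auto
      then show ?thesis by (simp add: measure_pmf_single)
    qed
    then show ?thesis unfolding ind_tamper_family_def f_def using assms(3)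
      by (intro CollectI exI[of _ chU]) auto
  qed
  have negP: "negligible (\<lambda>l. pmf (tamper_exp KGen Enc Dec f l) True)"
    using assms(5) fam unfolding ind_tamper_detecting_def by blast
  have "\<forall>l. \<exists>u. length u = n l \<and> (\<forall>v. length v = n l \<longrightarrow> val l v \<le> val l u)"
  proof
    fix l
    have fin: "finite {u :: bool list. length u = n l}" using finite_lists_length_eq[of "UNIV :: bool set" "n l"] by simp
    have "replicate (n l) True \<in> {u :: bool list. length u = n l}" by simp
    then have ne: "{u :: bool list. length u = n l} \<noteq> {}" by blast
    have "Max (val l ` {u :: bool list. length u = n l}) \<in> val l ` {u :: bool list. length u = n l}"
      using fin ne by (intro Max_in) auto
    then obtain u where u: "u \<in> {u :: bool list. length u = n l}" "val l u = Max (val l ` {u :: bool list. length u = n l})"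
      by auto
    have "\<forall>v \<in> {u :: bool list. length u = n l}. val l v \<le> val l u"
    proof
      fix v assume "v \<in> {u :: bool list. length u = n l}"
      then have "val l v \<le> Max (val l ` {u :: bool list. length u = n l})"
        using fin by (intro Max_ge) auto
      then show "val l v \<le> val l u" using u(2) by simp
    qed
    note u this
    then show "\<exists>u. length u = n l \<and> (\<forall>v. length v = n l \<longrightarrow> val l v \<le> val l u)" by auto
  qed
  from choice[OF this] obtain gh where gh0: "\<forall>l. length (gh l) = n l \<and> (\<forall>v. length v = n l \<longrightarrow> val l v \<le> val l (gh l))"
    by blast
  have gh: "\<And>l. length (gh l) = n l" "\<And>l v. length v = n l \<Longrightarrow> val l v \<le> val l (gh l)"
    using gh0 by auto
  have negS: "negligible (\<lambda>l. val l (gh l))"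
    using snd gh(1) unfolding sound_def val_def by blast
  have bound: "1/2 \<le> pmf (tamper_exp KGen Enc Dec f l) True + val l (gh l)" for l
  proof -
    have lenE: "\<gamma> \<in> set_pmf (Enc l sk) \<Longrightarrow> length \<gamma> = n l" for sk \<gamma>
      using assms(2) unfolding is_code_def by blast
    have "tamper_exp KGen Enc Dec f l = bind_pmf (KGen l) (\<lambda>sk. bind_pmf (Enc l sk) (\<lambda>\<gamma>. bind_pmf (U l) (\<lambda>u.
       return_pmf (Dec l sk u \<noteq> Tampered \<and> u \<noteq> \<gamma>))))"
      unfolding tamper_exp_def
    proof (intro bind_pmf_cong refl)
      fix sk \<gamma> assume "\<gamma> \<in> set_pmf (Enc l sk)"
      then have "length \<gamma> = n l" by (rule lenE)
      then show "f l \<gamma> = U l" unfolding f_def U_def by (subst ind_len_only) simp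
    qed
    moreover have "1/2 \<le> pmf (bind_pmf (KGen l) (\<lambda>sk. bind_pmf (Enc l sk) (\<lambda>\<gamma>. bind_pmf (U l) (\<lambda>u.
       return_pmf (Dec l sk u \<noteq> Tampered \<and> u \<noteq> \<gamma>))))) True + val l (gh l)"
    proof (rule key[where m = "n l"])
      show "\<And>sk \<gamma>. \<gamma> \<in> set_pmf (Enc l sk) \<Longrightarrow> length \<gamma> = n l" by (rule lenE)
      show "\<And>u. u \<in> set_pmf (U l) \<Longrightarrow> length u = n l" unfolding U_def by (drule ind_len) simp
      show "\<And>\<gamma>. length \<gamma> = n l \<Longrightarrow> pmf (U l) \<gamma> \<le> 1/2" unfolding U_def
      proof -
        have "replicate (n l) True \<noteq> []" using assms(1)[rule_format, of l] by auto
        then show "\<And>\<gamma>. pmf (ind_apply chU 0 (replicate (n l) True)) \<gamma> \<le> 1/2" by (rule ind_pmf_le)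
      qed
      show "\<And>u. val l u = measure_pmf.prob (KGen l) {sk. Dec l sk u \<noteq> Invalid}" by (simp add: val_def)
      show "\<And>u. length u = n l \<Longrightarrow> val l u \<le> val l (gh l)" by (rule gh(2))
    qed
    ultimately show ?thesis by simp
  qed
  define T where "T l = pmf (tamper_exp KGen Enc Dec f l) True + val l (gh l)" for l
  have "T \<in> o(\<lambda>l. inverse (real l powr 1))"
    unfolding T_def
    by (intro sum_in_smallo negP[unfolded negligible_def, rule_format, of 1] negS[unfolded negligible_def, rule_format, of 1]) simp_all
  then have "eventually (\<lambda>l. norm (T l) \<le> (1/4) * norm (inverse (real l powr 1))) at_top"
    by (rule landau_o.smallD) simp
  moreover have "eventually (\<lambda>l::nat. l \<ge> 1) at_top" by simp
  ultimately have "eventually (\<lambda>l. norm (T l) \<le> (1/4) * norm (inverse (real l powr 1)) \<and> l \<ge> 1) at_top"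
    by (rule eventually_conj)
  then obtain N :: nat where N: "\<forall>l\<ge>N. norm (T l) \<le> (1/4) * norm (inverse (real l powr 1)) \<and> l \<ge> 1"
    unfolding eventually_at_top_linorder by blast
  then have l: "norm (T N) \<le> (1/4) * norm (inverse (real N powr 1))" "N \<ge> 1" by auto
  define l where "l = N"
  note l = l[folded l_def]
  have "norm (inverse (real l powr 1)) \<le> 1" using l(2) by (simp add: inverse_le_1_iff)
  then have "T l \<le> 1/4" using l(1) by (simp only: real_norm_def)
  moreover have "1/2 \<le> T l" using bound unfolding T_def by simp
  ultimately show False by simp
qed

end
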